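(* Let $a>0$ and let $f:(a,\infty)\to\mathbb{R}$ be real analytic and not identically zero. Let $\mathcal I=\{x\in(a,\infty):f(x)=0\}$. Assume that: (1) as $x\to a$ we have $\kappa(f,x)\to\infty$, and for every sequence $x_j\in(a,\infty)$ with $x_j\to\infty$ and $\mathrm{dist}(x_j,\mathcal I)\to0$ we have $\kappa(f,x_j)\to\infty$; (2) both as $x\to a$ and as $x\to\infty$ we have $\limsup|H(f,x)|\leq C$ for some constant $C>0$, where $H(f,x)=\frac{x^2f(x)f''(x)}{f(x)^2+x^2f'(x)^2}$. The part of this hypothesis concerning $x\to a$ is automatically satisfied if $f$ admits an analytic extension to $(a-\epsilon,\infty)$ for some $\epsilon>0$. Then $f$ is amenable.
   Context: Relative distance on $\mathbb{R}$: $\mathrm{dist}(x,y)=0$ if $x=y=0$, $\mathrm{dist}(x,y)=|\log(y/x)|$ if $xy>0$, and $\mathrm{dist}(x,y)=\infty$ otherwise; for a set $S$, $\mathrm{dist}(x,S)=\inf_{s\in S}\mathrm{dist}(x,s)$. For a real analytic function $f$ on an open set $\Omega\subseteq\mathbb{R}$, not identically zero, the condition number is $\kappa(f,x)=0$ if $x=0$, $\kappa(f,x)=\infty$ if $x\neq0$ and $f(x)=0$, and $\kappa(f,x)=|x|\,|f'(x)|/|f(x)|$ otherwise; set $\mu(f,x)=1+\kappa(f,x)$. The function $f:\Omega\to\mathbb{R}$ is called amenable if there is a constant $C>0$ such that for every $x\in\Omega$ with $\kappa(f,x)<\infty$, the set $B_x=\{y\in\mathbb{R}:\mathrm{dist}(y,x)<1/(C\mu(f,x))\}$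 is contained in $\Omega$, and $\mu(f,y)\leq C\mu(f,x)$ for all $y\in B_x$. *)

theory Defs
  imports "HOL-Analysis.Analysis"
begin

definition real_analytic_on :: "(real \<Rightarrow> real) \<Rightarrow> real set \<Rightarrow> bool" where
  "real_analytic_on f S \<longleftrightarrow>
     (\<forall>x0\<in>S. \<exists>r>0. \<exists>c::nat \<Rightarrow> real.
        \<forall>x. \<bar>x - x0\<bar> < r \<longrightarrow> (\<lambda>n. c n * (x - x0) ^ n) sums f x)"

definition reldist :: "real \<Rightarrow> real \<Rightarrow> ereal" where
  "reldist x y = (if x = 0 \<and> y = 0 then 0
                  else if x * y > 0 then ereal \<bar>ln (y / x)\<bar>
                  else \<infinity>)"

definition reldist_set :: "real \<Rightarrow> real set \<Rightarrow> ereal" where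
  "reldist_set x S = (INF s\<in>S. reldist x s)"

definition kappa :: "(real \<Rightarrow> real) \<Rightarrow> real \<Rightarrow> ereal" where
  "kappa f x = (if x = 0 then 0
                else if f x = 0 then \<infinity>
                else ereal (\<bar>x\<bar> * \<bar>deriv f x\<bar> / \<bar>f x\<bar>))"

definition mu :: "(real \<Rightarrow> real) \<Rightarrow> real \<Rightarrow> ereal" where
  "mu f x = 1 + kappa f x"

definition amenable :: "(real \<Rightarrow> real) \<Rightarrow> real set \<Rightarrow> bool" where
  "amenable f \<Omega> \<longleftrightarrow>
     (\<exists>C>0. \<forall>x\<in>\<Omega>. kappa f x < \<infinity> \<longrightarrow>
        (let B = {y. reldist y x < 1 / (ereal C * mu f x)} in
           B \<subseteq> \<Omega> \<and> (\<forall>y\<in>B. mu f y \<le> ereal C * mu f x)))"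

definition Hf :: "(real \<Rightarrow> real) \<Rightarrow> real \<Rightarrow> real" where
  "Hf f x = x^2 * f x * deriv (deriv f) x / ((f x)^2 + x^2 * (deriv f x)^2)"

end

theory Submission
  imports Defs
begin


lemma lip_ln:
  fixes g g' :: "real \<Rightarrow> real"
  assumes "0 < s" "s \<le> t" "finite E" "continuous_on {s..t} g"
    "\<And>x. x \<in> {s..t} - E \<Longrightarrow> (g has_real_derivative g' x) (at x)"
    "\<And>x. x \<in> {s..t} \<Longrightarrow> \<bar>g' x\<bar> \<le> K / x"
  shows "\<bar>g t - g s\<bar> \<le> K * (ln t - ln s)"
proof -
  have 1: "(g' has_integral (g t - g s)) {s..t}"
    by (rule fundamental_theorem_of_calculus_strong[OF assms(3,2) _ assms(4)])
       (simp add: has_real_derivative_iff_has_vector_derivative[symmetric] assms(5))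
  have 2: "((\<lambda>x. K/x) has_integral (K*ln t - K*ln s)) {s..t}"
  proof (rule fundamental_theorem_of_calculus[OF assms(2)])
    fix x assume "x \<in> {s..t}"
    then have "x > 0" using assms(1) by auto
    then have "((\<lambda>x. K * ln x) has_real_derivative K * (1/x)) (at x within {s..t})"
      by (auto intro!: derivative_eq_intros)
    then show "((\<lambda>x. K * ln x) has_vector_derivative K / x) (at x within {s..t})"
      by (simp add: has_real_derivative_iff_has_vector_derivative[symmetric])
  qed
  have 3: "((\<lambda>x. - g' x) has_integral (- (g t - g s))) {s..t}"
    using has_integral_neg[OF 1] by simp
  have "g t - g s \<le> K*ln t - K*ln s"
    by (rule has_integral_le[OF 1 2]) (use assms(6) in force)
  moreover have "- (g t - g s) \<le> K*ln t - K*ln s"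
    by (rule has_integral_le[OF 3 2]) (use assms(6) in force)
  ultimately show ?thesis by (simp add: algebra_simps abs_le_iff)
qed


definition ps :: "(nat \<Rightarrow> real) \<Rightarrow> real \<Rightarrow> real" where
  "ps c w = (\<Sum>n. c n * w^n)"

lemma ps_summ_diffs:
  fixes c :: "nat \<Rightarrow> real"
  assumes sm: "\<And>w. \<bar>w\<bar> < r \<Longrightarrow> summable (\<lambda>n. c n * w^n)"
  shows "\<And>w. \<bar>w\<bar> < r \<Longrightarrow> summable (\<lambda>n. diffs c n * w^n)"
  using termdiff_converges[of _ r c] sm by auto

lemma ps_deriv:
  fixes c :: "nat \<Rightarrow> real"
  assumes sm: "\<And>w. \<bar>w\<bar> < r \<Longrightarrow> summable (\<lambda>n. c n * w^n)" and w: "\<bar>w\<bar> < r"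
  shows "(ps c has_real_derivative ps (diffs c) w) (at w)"
  unfolding ps_def using termdiffs_strong'[of r c w] sm w by auto

lemma ps_isCont:
  fixes c :: "nat \<Rightarrow> real"
  assumes sm: "\<And>w. \<bar>w\<bar> < r \<Longrightarrow> summable (\<lambda>n. c n * w^n)" and w: "\<bar>w\<bar> < r"
  shows "isCont (ps c) w"
  using ps_deriv[OF assms] by (rule DERIV_isCont)

lemma shift_deriv: "(g has_real_derivative D) (at (x - z)) \<Longrightarrow> ((\<lambda>y. g (y - z)) has_real_derivative D) (at x)"
  using DERIV_shift[of g D x "-z"] by simp

context
  fixes f :: "real \<Rightarrow> real" and a :: real
  assumes a_pos: "a > 0"
    and analytic: "real_analytic_on f {a<..}"
begin

lemma local_ps:
  assumes "z > a"
  shows "\<exists>r>0. \<exists>c. (\<forall>w. \<bar>w\<bar> < r \<longrightarrow> summable (\<lambda>n. c n * w^n)) \<and>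
     (\<forall>x. \<bar>x - z\<bar> < r \<longrightarrow> f x = ps c (x - z) \<and> deriv f x = ps (diffs c) (x - z)
        \<and> deriv (deriv f) x = ps (diffs (diffs c)) (x - z))"
proof -
  obtain r c where r: "r > 0" and sums: "\<And>x. \<bar>x - z\<bar> < r \<Longrightarrow> (\<lambda>n. c n * (x - z) ^ n) sums f x"
    using analytic assms unfolding real_analytic_on_def by force
  have sm: "\<And>w. \<bar>w\<bar> < r \<Longrightarrow> summable (\<lambda>n. c n * w^n)"
    using sums[of "_ + z"] sums_summable by fastforce
  have sm1: "\<And>w. \<bar>w\<bar> < r \<Longrightarrow> summable (\<lambda>n. diffs c n * w^n)"
    by (rule ps_summ_diffs[OF sm])
  have sm2: "\<And>w. \<bar>w\<bar> < r \<Longrightarrow> summable (\<lambda>n. diffs (diffs c) n * w^n)"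
    by (rule ps_summ_diffs[OF sm1])
  have B: "open (ball z r)" by simp
  have f0: "f x = ps c (x - z)" if "x \<in> ball z r" for x
    using sums[of x] that unfolding ps_def by (simp add: dist_real_def sums_iff abs_minus_commute)
  have d0: "((\<lambda>y. ps d (y - z)) has_real_derivative ps (diffs d) (x - z)) (at x)"
    if "x \<in> ball z r" "\<And>w. \<bar>w\<bar> < r \<Longrightarrow> summable (\<lambda>n. d n * w^n)" for x d
  proof -
    have "(ps d has_real_derivative ps (diffs d) (x - z)) (at (x - z))"
      using ps_deriv[of r d "x - z"] that by (simp add: dist_real_def abs_minus_commute)
    from shift_deriv[OF this] show ?thesis .
  qed
  have f1: "(f has_real_derivative ps (diffs c) (x - z)) (at x)" if "x \<in> ball z r" for x
    using f0 by (intro has_field_derivative_transform_within_open[OF d0[OF that sm] B that]) auto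
  have df: "deriv f x = ps (diffs c) (x - z)" if "x \<in> ball z r" for x
    using f1[OF that] by (rule DERIV_imp_deriv)
  have f2: "(deriv f has_real_derivative ps (diffs (diffs c)) (x - z)) (at x)" if "x \<in> ball z r" for x
    using df by (intro has_field_derivative_transform_within_open[OF d0[OF that sm1] B that]) auto
  have ddf: "deriv (deriv f) x = ps (diffs (diffs c)) (x - z)" if "x \<in> ball z r" for x
    using f2[OF that] by (rule DERIV_imp_deriv)
  show ?thesis
    using r sm f0 df ddf by (intro exI[of _ r] conjI exI[of _ c]) (auto simp: dist_real_def abs_minus_commute)
qed

lemma f_deriv1: "x > a \<Longrightarrow> (f has_real_derivative deriv f x) (at x)"
proof -
  assume x: "x > a"
  obtain r c where r: "r > 0" and sm: "\<And>w. \<bar>w\<bar> < r \<Longrightarrow> summable (\<lambda>n. c n * w^n)"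
    and e: "\<And>y. \<bar>y - x\<bar> < r \<Longrightarrow> f y = ps c (y - x) \<and> deriv f y = ps (diffs c) (y - x)
        \<and> deriv (deriv f) y = ps (diffs (diffs c)) (y - x)"
    using local_ps[OF x] by metis
  have "(ps c has_real_derivative ps (diffs c) 0) (at 0)"
    using ps_deriv[OF sm] r by simp
  from shift_deriv[of _ _ x x, simplified, OF this]
  have "((\<lambda>y. ps c (y - x)) has_real_derivative ps (diffs c) 0) (at x)"
    .
  then have "(f has_real_derivative ps (diffs c) 0) (at x)"
    apply (rule has_field_derivative_transform_within_open[of _ _ _ "ball x r"])
    using r e by (auto simp: dist_real_def abs_minus_commute)
  moreover have "deriv (f) x = ps (diffs c) 0" using e[of x] r by simp
  ultimately show ?thesis by simp
qed

lemma f_deriv2: "x > a \<Longrightarrow> (deriv f has_real_derivative deriv (deriv f) x) (at x)"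
proof -
  assume x: "x > a"
  obtain r c where r: "r > 0" and sm: "\<And>w. \<bar>w\<bar> < r \<Longrightarrow> summable (\<lambda>n. c n * w^n)"
    and e: "\<And>y. \<bar>y - x\<bar> < r \<Longrightarrow> f y = ps c (y - x) \<and> deriv f y = ps (diffs c) (y - x)
        \<and> deriv (deriv f) y = ps (diffs (diffs c)) (y - x)"
    using local_ps[OF x] by metis
  have "(ps (diffs c) has_real_derivative ps (diffs (diffs c)) 0) (at 0)"
    using ps_deriv[OF ps_summ_diffs[OF sm]] r by simp
  from shift_deriv[of _ _ x x, simplified, OF this]
  have "((\<lambda>y. ps (diffs c) (y - x)) has_real_derivative ps (diffs (diffs c)) 0) (at x)"
    .
  then have "(deriv f has_real_derivative ps (diffs (diffs c)) 0) (at x)"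
    apply (rule has_field_derivative_transform_within_open[of _ _ _ "ball x r"])
    using r e by (auto simp: dist_real_def abs_minus_commute)
  moreover have "deriv (deriv f) x = ps (diffs (diffs c)) 0" using e[of x] r by simp
  ultimately show ?thesis by simp
qed

end


lemma ps_factor:
  fixes c :: "nat \<Rightarrow> real"
  assumes sm: "\<And>w. \<bar>w\<bar> < r \<Longrightarrow> summable (\<lambda>n. c n * w^n)" and z: "\<forall>n<m. c n = 0"
    and w: "\<bar>w\<bar> < r"
  shows "summable (\<lambda>n. c (n+m) * w^n)" and "ps c w = w^m * ps (\<lambda>n. c (n+m)) w"
proof -
  have s0: "summable (\<lambda>n. c (n+m) * w^(n+m))"
    using summable_iff_shift[of "\<lambda>n. c n * w^n" m] sm[OF w] by simp
  show s1: "summable (\<lambda>n. c (n+m) * w^n)"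
  proof (cases "w = 0")
    case True
    then show ?thesis using powser_sums_zero[of "\<lambda>n. c (n+m)"] sums_summable by auto
  next
    case False
    have "summable (\<lambda>n. inverse (w^m) * (c (n+m) * w^(n+m)))"
      by (rule summable_mult[OF s0])
    moreover have "(\<lambda>n. inverse (w^m) * (c (n+m) * w^(n+m))) = (\<lambda>n. c (n+m) * w^n)"
      using False by (auto simp: power_add field_simps)
    ultimately show ?thesis by simp
  qed
  have "ps c w = (\<Sum>n. c (n+m) * w^(n+m)) + (\<Sum>i<m. c i * w^i)"
    unfolding ps_def by (rule suminf_split_initial_segment[OF sm[OF w]])
  also have "(\<Sum>i<m. c i * w^i) = 0" using z by simp
  also have "(\<Sum>n. c (n+m) * w^(n+m)) = (\<Sum>n. w^m * (c (n+m) * w^n))"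
    by (simp add: power_add algebra_simps)
  also have "\<dots> = w^m * ps (\<lambda>n. c (n+m)) w"
    unfolding ps_def by (rule suminf_mult[OF s1])
  finally show "ps c w = w^m * ps (\<lambda>n. c (n+m)) w" by simp
qed

lemma ps_at0: "ps c 0 = c 0"
  unfolding ps_def by simp

lemma zero_struct:
  fixes c :: "nat \<Rightarrow> real" and k :: nat
  assumes sm: "\<And>w. \<bar>w\<bar> < r \<Longrightarrow> summable (\<lambda>n. c n * w^n)" and r: "r > 0"
    and z: "\<forall>n\<le>k. c n = 0" and nz: "c (Suc k) \<noteq> 0"
  shows "\<exists>\<rho>>0. \<rho> \<le> r \<and> (\<exists>B\<ge>0. \<exists>q. (q \<midarrow>0\<rightarrow> 0) \<and> (\<forall>w. \<bar>w\<bar> < \<rho> \<longrightarrow>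
     \<bar>ps c w * ps (diffs (diffs c)) w\<bar> \<le> B * (ps (diffs c) w)^2 \<and> ps c w = q w * ps (diffs c) w
     \<and> (w \<noteq> 0 \<longrightarrow> ps c w \<noteq> 0)))"
proof -
  define d where "d = (\<lambda>n. c (n + Suc k))"
  define U where "U = ps d"
  define U1 where "U1 = ps (diffs d)"
  define U2 where "U2 = ps (diffs (diffs d))"
  define V where "V = (\<lambda>w. real (Suc k) * U w + w * U1 w)"
  define V' where "V' = (\<lambda>w. real (Suc k) * U1 w + (U1 w + w * U2 w))"
  have smd: "\<And>w. \<bar>w\<bar> < r \<Longrightarrow> summable (\<lambda>n. d n * w^n)"
    unfolding d_def by (rule ps_factor(1)[OF sm]) (use z in auto)
  have smd1: "\<And>w. \<bar>w\<bar> < r \<Longrightarrow> summable (\<lambda>n. diffs d n * w^n)"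
    by (rule ps_summ_diffs[OF smd])
  have smd2: "\<And>w. \<bar>w\<bar> < r \<Longrightarrow> summable (\<lambda>n. diffs (diffs d) n * w^n)"
    by (rule ps_summ_diffs[OF smd1])
  have sm1: "\<And>w. \<bar>w\<bar> < r \<Longrightarrow> summable (\<lambda>n. diffs c n * w^n)"
    by (rule ps_summ_diffs[OF sm])
  have Pfac: "ps c w = w^Suc k * U w" if "\<bar>w\<bar> < r" for w
    unfolding U_def d_def by (rule ps_factor(2)[OF sm _ that]) (use z in auto)
  have dU: "(U has_real_derivative U1 w) (at w)" if "\<bar>w\<bar> < r" for w
    unfolding U_def U1_def by (rule ps_deriv[OF smd that])
  have dU1: "(U1 has_real_derivative U2 w) (at w)" if "\<bar>w\<bar> < r" for w
    unfolding U2_def U1_def by (rule ps_deriv[OF smd1 that])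
  have cU2: "isCont U2 w" if "\<bar>w\<bar> < r" for w
    unfolding U2_def by (rule ps_isCont[OF smd2 that])
  have Bo: "open (ball (0::real) r)" by simp
  have inB: "\<bar>w\<bar> < r \<Longrightarrow> w \<in> ball 0 r" for w by simp
  have P1fac: "ps (diffs c) w = w^k * V w" if w: "\<bar>w\<bar> < r" for w
  proof -
    have "((\<lambda>w. w^Suc k * U w) has_real_derivative
            (real (Suc k) * w^k * U w + w^Suc k * U1 w)) (at w)"
    proof -
      have aux: "w^k + real k * w^(k - Suc 0) * w = (1 + real k) * w^k"
        by (cases k) (auto simp: algebra_simps)
      show ?thesis using dU[OF w] aux by (auto intro!: derivative_eq_intros simp: algebra_simps)
    qed
    then have "(ps c has_real_derivative (real (Suc k) * w^k * U w + w^Suc k * U1 w)) (at w)"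
      by (rule has_field_derivative_transform_within_open[OF _ Bo inB[OF w]]) (simp add: Pfac)
    from DERIV_unique[OF ps_deriv[OF sm w] this] show ?thesis
      by (simp add: V_def algebra_simps)
  qed
  have P2fac: "w * ps (diffs (diffs c)) w = w^k * (real k * V w + w * V' w)" if w: "\<bar>w\<bar> < r" for w
  proof -
    have "((\<lambda>w. w^k * V w) has_real_derivative
            (real k * w^(k-1) * V w + w^k * V' w)) (at w)"
      unfolding V_def V'_def using dU[OF w] dU1[OF w]
      by (auto intro!: derivative_eq_intros simp: algebra_simps)
    then have "(ps (diffs c) has_real_derivative (real k * w^(k-1) * V w + w^k * V' w)) (at w)"
      by (rule has_field_derivative_transform_within_open[OF _ Bo inB[OF w]]) (simp add: P1fac)
    from DERIV_unique[OF ps_deriv[OF sm1 w] this]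
    have "ps (diffs (diffs c)) w = real k * w^(k-1) * V w + w^k * V' w" .
    moreover have "w * (real k * w^(k-1) * V w) = w^k * (real k * V w)"
      by (cases k) (auto simp: algebra_simps)
    ultimately show ?thesis by (simp add: algebra_simps)
  qed
  have U0: "U 0 = c (Suc k)" unfolding U_def d_def by (simp add: ps_at0)
  have V0: "V 0 \<noteq> 0" using U0 nz by (simp add: V_def)
  have cU: "isCont U 0" using dU[of 0] r by (simp add: DERIV_isCont)
  have cU1: "isCont U1 0" using dU1[of 0] r by (simp add: DERIV_isCont)
  have cV: "isCont V 0" unfolding V_def using cU cU1 by (auto intro!: continuous_intros)
  have cV': "isCont V' 0" unfolding V'_def using cU1 cU2[of 0] r by (auto intro!: continuous_intros)
  define g where "g = (\<lambda>w. U w * (real k * V w + w * V' w) / (V w)^2)"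
  have cg: "isCont g 0" unfolding g_def using cU cV cV' V0 by (auto intro!: continuous_intros)
  define q where "q = (\<lambda>w. w * U w / V w)"
  have cq: "isCont q 0" unfolding q_def using cU cV V0 by (auto intro!: continuous_intros)
  have q0: "q \<midarrow>0\<rightarrow> 0" using cq by (simp add: isCont_def q_def)
  have ev: "\<forall>\<^sub>F w in nhds 0. V w \<noteq> 0 \<and> U w \<noteq> 0 \<and> \<bar>g w\<bar> < \<bar>g 0\<bar> + 1"
  proof -
    have "\<forall>\<^sub>F w in nhds 0. V w \<noteq> 0"
      using cV V0 by (simp add: isCont_def tendsto_at_iff_tendsto_nhds tendsto_imp_eventually_ne)
    moreover have "\<forall>\<^sub>F w in nhds 0. U w \<noteq> 0"
      using cU U0 nz unfolding isCont_def tendsto_at_iff_tendsto_nhds by (metis tendsto_imp_eventually_ne)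
    moreover have "\<forall>\<^sub>F w in nhds 0. \<bar>g w\<bar> < \<bar>g 0\<bar> + 1"
    proof -
      have "((\<lambda>w. \<bar>g w\<bar>) \<longlongrightarrow> \<bar>g 0\<bar>) (nhds 0)"
        using cg by (intro tendsto_intros) (simp add: isCont_def tendsto_at_iff_tendsto_nhds)
      then show ?thesis by (rule order_tendstoD) simp
    qed
    ultimately show ?thesis by eventually_elim auto
  qed
  then obtain \<rho>0 where \<rho>0: "\<rho>0 > 0" "\<And>w. \<bar>w\<bar> < \<rho>0 \<Longrightarrow> V w \<noteq> 0 \<and> U w \<noteq> 0 \<and> \<bar>g w\<bar> < \<bar>g 0\<bar> + 1"
    unfolding eventually_nhds_metric by (auto simp: dist_real_def)
  define \<rho> where "\<rho> = min \<rho>0 r"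
  define B where "B = \<bar>g 0\<bar> + 1"
  have main: "\<bar>ps c w * ps (diffs (diffs c)) w\<bar> \<le> B * (ps (diffs c) w)^2 \<and> ps c w = q w * ps (diffs c) w
     \<and> (w \<noteq> 0 \<longrightarrow> ps c w \<noteq> 0)" if w: "\<bar>w\<bar> < \<rho>" for w
  proof -
    have wr: "\<bar>w\<bar> < r" and w0: "\<bar>w\<bar> < \<rho>0" using w by (auto simp: \<rho>_def)
    note h = \<rho>0(2)[OF w0]
    have eq1: "ps c w * ps (diffs (diffs c)) w = w^k * U w * (w * ps (diffs (diffs c)) w)"
      using Pfac[OF wr] by (simp add: algebra_simps)
    also have "\<dots> = w^k * U w * (w^k * (real k * V w + w * V' w))" using P2fac[OF wr] by simp
    also have "\<dots> = (w^k * V w)^2 * g w" using h by (simp add: g_def power2_eq_square field_simps)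
    finally have e1: "ps c w * ps (diffs (diffs c)) w = (ps (diffs c) w)^2 * g w"
      using P1fac[OF wr] by simp
    have "\<bar>(ps (diffs c) w)^2 * g w\<bar> \<le> (ps (diffs c) w)^2 * B"
      using h by (auto simp: abs_mult B_def intro!: mult_left_mono)
    then have A: "\<bar>ps c w * ps (diffs (diffs c)) w\<bar> \<le> B * (ps (diffs c) w)^2"
      using e1 by (simp add: mult.commute)
    have Bq: "ps c w = q w * ps (diffs c) w"
      using Pfac[OF wr] P1fac[OF wr] h by (simp add: q_def field_simps)
    have "w \<noteq> 0 \<longrightarrow> ps c w \<noteq> 0" using Pfac[OF wr] h by simp
    with A Bq show ?thesis by blast
  qed
  have R1: "\<rho> > 0" using \<rho>0 r by (simp add: \<rho>_def)
  have R2: "\<rho> \<le> r" by (simp add: \<rho>_def)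
  have R3: "B \<ge> 0" by (simp add: B_def)
  have R4: "\<forall>w. \<bar>w\<bar> < \<rho> \<longrightarrow>
     \<bar>ps c w * ps (diffs (diffs c)) w\<bar> \<le> B * (ps (diffs c) w)^2 \<and> ps c w = q w * ps (diffs c) w
     \<and> (w \<noteq> 0 \<longrightarrow> ps c w \<noteq> 0)" using main by blast
  show ?thesis using R1 R2 R3 R4 q0 by blast
qed


lemma H_le:
  fixes F F1 F2 x B :: real
  assumes "B \<ge> 0" "\<bar>F * F2\<bar> \<le> B * F1^2"
  shows "\<bar>x^2 * F * F2 / (F^2 + x^2 * F1^2)\<bar> \<le> B"
proof (cases "F^2 + x^2 * F1^2 = 0")
  case True then show ?thesis using assms by simp
next
  case False
  have "F^2 + x^2 * F1^2 \<ge> 0" by (intro add_nonneg_nonneg) simp_all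
  with False have D: "F^2 + x^2 * F1^2 > 0" by linarith
  have "\<bar>x^2 * F * F2\<bar> = x^2 * \<bar>F * F2\<bar>" by (simp add: abs_mult)
  also have "\<dots> \<le> x^2 * (B * F1^2)" using assms(2) by (intro mult_left_mono) simp_all
  finally have 1: "\<bar>x^2 * F * F2\<bar> \<le> x^2 * (B * F1^2)" .
  have 2: "B * (F^2 + x^2 * F1^2) = B * F^2 + x^2 * (B * F1^2)" by (simp add: algebra_simps)
  have 3: "B * F^2 \<ge> 0" using assms(1) by simp
  have 4: "\<bar>x^2 * F * F2 / (F^2 + x^2 * F1^2)\<bar> = \<bar>x^2 * F * F2\<bar> / (F^2 + x^2 * F1^2)"
    using D by (simp add: abs_divide)
  show ?thesis unfolding 4 pos_divide_le_eq[OF D] using 1 2 3 by linarith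
qed

lemma sigma_le:
  fixes F F1 q x :: real
  assumes "x > 0" "F = q * F1"
  shows "\<bar>F / sqrt (F^2 + x^2 * F1^2)\<bar> \<le> \<bar>q\<bar> / x"
proof (cases "F1 = 0")
  case True then show ?thesis using assms by simp
next
  case False
  have s: "x * \<bar>F1\<bar> \<le> sqrt (F^2 + x^2 * F1^2)"
    using assms(1) by (intro real_le_rsqrt) (simp add: power_mult_distrib)
  have p: "x * \<bar>F1\<bar> > 0" using False assms(1) by simp
  have sp: "sqrt (F^2 + x^2 * F1^2) > 0" using s p by linarith
  have "\<bar>F / sqrt (F^2 + x^2 * F1^2)\<bar> = \<bar>F\<bar> / sqrt (F^2 + x^2 * F1^2)" by (simp add: abs_div_pos)
  also have "\<dots> \<le> \<bar>F\<bar> / (x * \<bar>F1\<bar>)" using s p sp by (intro divide_left_mono) (auto simp: mult_pos_pos)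
  also have "\<dots> = \<bar>q\<bar> / x" using assms False by (simp add: abs_mult)
  finally show ?thesis .
qed

lemma isCont_local_bound:
  fixes h :: "real \<Rightarrow> real"
  assumes "isCont h z"
  shows "\<exists>\<rho>>0. \<forall>x. \<bar>x - z\<bar> < \<rho> \<longrightarrow> \<bar>h x\<bar> \<le> \<bar>h z\<bar> + 1"
proof -
  have "((\<lambda>x. \<bar>h x\<bar>) \<longlongrightarrow> \<bar>h z\<bar>) (nhds z)"
    using assms by (intro tendsto_intros) (simp add: isCont_def tendsto_at_iff_tendsto_nhds)
  then have "\<forall>\<^sub>F x in nhds z. \<bar>h x\<bar> < \<bar>h z\<bar> + 1" by (rule order_tendstoD) simp
  then obtain \<rho> where "\<rho> > 0" "\<And>x. dist x z < \<rho> \<Longrightarrow> \<bar>h x\<bar> < \<bar>h z\<bar> + 1"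
    unfolding eventually_nhds_metric by auto
  then show ?thesis by (intro exI[of _ \<rho>]) (auto simp: dist_real_def less_imp_le)
qed

context
  fixes f :: "real \<Rightarrow> real" and a :: real
  assumes a_pos: "a > 0"
    and analytic: "real_analytic_on f {a<..}"
    and nonzero: "\<exists>x>a. f x \<noteq> 0"
begin

lemma local_zero_gen:
  assumes z: "z > a" and fz: "f z = 0"
  obtains r where "r > 0" "\<forall>x. \<bar>x - z\<bar> < r \<longrightarrow> f x = 0"
  | \<rho> B q where "\<rho> > 0" "B \<ge> 0" "q \<midarrow>0\<rightarrow> 0" "\<forall>x. \<bar>x - z\<bar> < \<rho> \<longrightarrow>
        \<bar>f x * deriv (deriv f) x\<bar> \<le> B * (deriv f x)^2 \<and> f x = q (x - z) * deriv f x
        \<and> (x \<noteq> z \<longrightarrow> f x \<noteq> 0)"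
proof -
  obtain r c where r: "r > 0" and sm0: "\<forall>w. \<bar>w\<bar> < r \<longrightarrow> summable (\<lambda>n. c n * w^n)"
    and e0: "\<forall>y. \<bar>y - z\<bar> < r \<longrightarrow> f y = ps c (y - z) \<and> deriv f y = ps (diffs c) (y - z)
        \<and> deriv (deriv f) y = ps (diffs (diffs c)) (y - z)"
    using local_ps[OF a_pos analytic z] by blast
  have sm: "\<And>w. \<bar>w\<bar> < r \<Longrightarrow> summable (\<lambda>n. c n * w^n)" using sm0 by blast
  have e: "\<And>y. \<bar>y - z\<bar> < r \<Longrightarrow> f y = ps c (y - z) \<and> deriv f y = ps (diffs c) (y - z)
        \<and> deriv (deriv f) y = ps (diffs (diffs c)) (y - z)" using e0 by blast
  show ?thesis
  proof (cases "\<forall>n. c n = 0")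
    case True
    then have "\<forall>x. \<bar>x - z\<bar> < r \<longrightarrow> f x = 0" using e by (simp add: ps_def)
    then show ?thesis using r that(1) by blast
  next
    case False
    define m where "m = (LEAST n. c n \<noteq> 0)"
    have cm: "c m \<noteq> 0" unfolding m_def using False by (metis (mono_tags) LeastI)
    have below: "\<forall>n<m. c n = 0" unfolding m_def using not_less_Least by blast
    have "c 0 = 0" using e[of z] r fz by (simp add: ps_at0)
    then obtain k where k: "m = Suc k" using cm by (cases m) auto
    have "\<forall>n\<le>k. c n = 0" using below k by auto
    from zero_struct[OF sm r this] cm k obtain \<rho> B q where
      \<rho>: "\<rho> > 0" "\<rho> \<le> r" "B \<ge> 0" "q \<midarrow>0\<rightarrow> 0"
      and h: "\<And>w. \<bar>w\<bar> < \<rho> \<Longrightarrow>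
     \<bar>ps c w * ps (diffs (diffs c)) w\<bar> \<le> B * (ps (diffs c) w)^2 \<and> ps c w = q w * ps (diffs c) w
     \<and> (w \<noteq> 0 \<longrightarrow> ps c w \<noteq> 0)" by blast
    have H: "\<forall>x. \<bar>x - z\<bar> < \<rho> \<longrightarrow>
        \<bar>f x * deriv (deriv f) x\<bar> \<le> B * (deriv f x)^2 \<and> f x = q (x - z) * deriv f x
        \<and> (x \<noteq> z \<longrightarrow> f x \<noteq> 0)"
    proof (intro allI impI)
      fix x assume x: "\<bar>x - z\<bar> < \<rho>"
      then have xr: "\<bar>x - z\<bar> < r" using \<rho> by simp
      have ex: "f x = ps c (x - z)" "deriv f x = ps (diffs c) (x - z)" "deriv (deriv f) x = ps (diffs (diffs c)) (x - z)"
        using e[OF xr] by auto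
      show "\<bar>f x * deriv (deriv f) x\<bar> \<le> B * (deriv f x)^2 \<and> f x = q (x - z) * deriv f x
        \<and> (x \<noteq> z \<longrightarrow> f x \<noteq> 0)"
        unfolding ex using h[OF x] unfolding right_minus_eq by blast
    qed
    show ?thesis by (rule that(2)[OF \<rho>(1) \<rho>(3) \<rho>(4) H])
  qed
qed

lemma dichotomy:
  assumes z: "z > a"
  shows "(\<exists>r>0. \<forall>x. \<bar>x - z\<bar> < r \<longrightarrow> f x = 0) \<or>
         (\<exists>\<rho>>0. \<forall>x. 0 < \<bar>x - z\<bar> \<and> \<bar>x - z\<bar> < \<rho> \<longrightarrow> f x \<noteq> 0)"
proof (cases "f z = 0")
  case True
  show ?thesis
  proof (rule local_zero_gen[OF z True])
    fix r assume "r > 0" "\<forall>x. \<bar>x - z\<bar> < r \<longrightarrow> f x = 0"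
    then show ?thesis by blast
  next
    fix \<rho> B q assume "\<rho> > 0" and H: "\<forall>x. \<bar>x - z\<bar> < \<rho> \<longrightarrow>
        \<bar>f x * deriv (deriv f) x\<bar> \<le> B * (deriv f x)^2 \<and> f x = q (x - z) * deriv f x
        \<and> (x \<noteq> z \<longrightarrow> f x \<noteq> 0)"
    have "\<forall>x. 0 < \<bar>x - z\<bar> \<and> \<bar>x - z\<bar> < \<rho> \<longrightarrow> f x \<noteq> 0"
    proof (intro allI impI)
      fix x assume hx: "0 < \<bar>x - z\<bar> \<and> \<bar>x - z\<bar> < \<rho>"
      then have "x \<noteq> z" by auto
      moreover have "x \<noteq> z \<longrightarrow> f x \<noteq> 0" using H hx by blast
      ultimately show "f x \<noteq> 0" by blast
    qed
    with \<open>\<rho> > 0\<close> show ?thesis by blast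
  qed
next
  case False
  have "isCont f z" using f_deriv1[OF a_pos analytic z] by (rule DERIV_isCont)
  then have "\<forall>\<^sub>F x in nhds z. f x \<noteq> 0"
    using False unfolding isCont_def tendsto_at_iff_tendsto_nhds by (metis tendsto_imp_eventually_ne)
  then obtain \<rho> where "\<rho> > 0" "\<And>x. dist x z < \<rho> \<Longrightarrow> f x \<noteq> 0"
    unfolding eventually_nhds_metric by auto
  then show ?thesis by (auto simp: dist_real_def)
qed


end


context
  fixes f :: "real \<Rightarrow> real" and a :: real
  assumes a_pos: "a > 0"
    and analytic: "real_analytic_on f {a<..}"
    and nonzero: "\<exists>x>a. f x \<noteq> 0"
begin

lemma not_flat:
  assumes z: "z > a"
  shows "\<not> (\<exists>r>0. \<forall>x. \<bar>x - z\<bar> < r \<longrightarrow> f x = 0)"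
proof -
  define Uo where "Uo = {x. \<exists>r>0. \<forall>y. \<bar>y - x\<bar> < r \<longrightarrow> f y = 0}"
  define Vo where "Vo = {x. \<exists>\<rho>>0. \<forall>y. 0 < \<bar>y - x\<bar> \<and> \<bar>y - x\<bar> < \<rho> \<longrightarrow> f y \<noteq> 0}"
  have oU: "open Uo" unfolding open_dist
  proof
    fix x assume "x \<in> Uo"
    then obtain r where r: "r > 0" "\<And>y. \<bar>y - x\<bar> < r \<Longrightarrow> f y = 0" unfolding Uo_def by blast
    show "\<exists>e>0. \<forall>y. dist y x < e \<longrightarrow> y \<in> Uo"
    proof (intro exI[of _ r] conjI allI impI)
      fix y assume "dist y x < r"
      have "\<forall>y'. \<bar>y' - y\<bar> < r - \<bar>y - x\<bar> \<longrightarrow> f y' = 0"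
      proof (intro allI impI)
        fix y' assume "\<bar>y' - y\<bar> < r - \<bar>y - x\<bar>"
        then have "\<bar>y' - x\<bar> < r" by arith
        then show "f y' = 0" by (rule r(2))
      qed
      moreover have "r - \<bar>y - x\<bar> > 0" using \<open>dist y x < r\<close> by (simp add: dist_real_def)
      ultimately show "y \<in> Uo" unfolding Uo_def by blast
    qed (use r in auto)
  qed
  have oV: "open Vo" unfolding open_dist
  proof
    fix x assume "x \<in> Vo"
    then obtain r where r: "r > 0" "\<And>y. 0 < \<bar>y - x\<bar> \<Longrightarrow> \<bar>y - x\<bar> < r \<Longrightarrow> f y \<noteq> 0" unfolding Vo_def by blast
    show "\<exists>e>0. \<forall>y. dist y x < e \<longrightarrow> y \<in> Vo"
    proof (intro exI[of _ r] conjI allI impI)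
      fix y assume d: "dist y x < r"
      show "y \<in> Vo"
      proof (cases "y = x")
        case True then show ?thesis using \<open>x \<in> Vo\<close> by simp
      next
        case False
        have "\<forall>y'. 0 < \<bar>y' - y\<bar> \<and> \<bar>y' - y\<bar> < min \<bar>y - x\<bar> (r - \<bar>y - x\<bar>) \<longrightarrow> f y' \<noteq> 0"
        proof (intro allI impI)
          fix y' assume h: "0 < \<bar>y' - y\<bar> \<and> \<bar>y' - y\<bar> < min \<bar>y - x\<bar> (r - \<bar>y - x\<bar>)"
          then have "0 < \<bar>y' - x\<bar>" by arith
          moreover have "\<bar>y' - x\<bar> < r" using h by arith
          ultimately show "f y' \<noteq> 0" by (rule r(2))
        qed
        moreover have "min \<bar>y - x\<bar> (r - \<bar>y - x\<bar>) > 0" using d False by (simp add: dist_real_def)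
        ultimately show ?thesis unfolding Vo_def by blast
      qed
    qed (use r in auto)
  qed
  have disj: "Uo \<inter> Vo \<inter> {a<..} = {}"
  proof (rule ccontr)
    assume "Uo \<inter> Vo \<inter> {a<..} \<noteq> {}"
    then obtain x where "x \<in> Uo" "x \<in> Vo" by blast
    then obtain r \<rho> where r: "r > 0" "\<And>y. \<bar>y - x\<bar> < r \<Longrightarrow> f y = 0"
      and \<rho>: "\<rho> > 0" "\<And>y. 0 < \<bar>y - x\<bar> \<Longrightarrow> \<bar>y - x\<bar> < \<rho> \<Longrightarrow> f y \<noteq> 0"
      unfolding Uo_def Vo_def mem_Collect_eq by blast
    have "f (x + min r \<rho> / 2) = 0" using r \<rho> by (intro r(2)) auto
    moreover have "f (x + min r \<rho> / 2) \<noteq> 0" using r \<rho> by (intro \<rho>(2)) auto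
    ultimately show False by simp
  qed
  have cov: "{a<..} \<subseteq> Uo \<union> Vo"
  proof
    fix x assume "x \<in> {a<..}"
    then have "x > a" by simp
    show "x \<in> Uo \<union> Vo" unfolding Uo_def Vo_def mem_Collect_eq Un_iff by (rule dichotomy[OF a_pos analytic nonzero \<open>x > a\<close>])
  qed
  from connectedD[OF connected_Ioi oU oV disj cov]
  have "Uo \<inter> {a<..} = {} \<or> Vo \<inter> {a<..} = {}" .
  moreover have "Vo \<inter> {a<..} \<noteq> {}"
  proof
    assume "Vo \<inter> {a<..} = {}"
    obtain x where x: "x > a" "f x \<noteq> 0" using nonzero by blast
    then have "x \<in> Uo \<union> Vo" using cov by auto
    then have "x \<in> Uo" using x \<open>Vo \<inter> {a<..} = {}\<close> by auto
    then obtain r where "r > 0" "\<forall>y. \<bar>y - x\<bar> < r \<longrightarrow> f y = 0" unfolding Uo_def by blast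
    then have "f x = 0" by simp
    then show False using x by simp
  qed
  ultimately have "Uo \<inter> {a<..} = {}" by blast
  then show ?thesis using z unfolding Uo_def by blast
qed

end


lemma isCont_shift: "isCont g 0 \<Longrightarrow> isCont (\<lambda>x. g (x - z)) (z::real)"
proof -
  assume h: "isCont g 0"
  have 1: "isCont (\<lambda>x::real. x - z) z" by (intro continuous_intros)
  have 2: "isCont g ((\<lambda>x. x - z) z)" using h by simp
  show ?thesis using isCont_o2[OF 1 2] by simp
qed

context
  fixes f :: "real \<Rightarrow> real" and a :: real
  assumes a_pos: "a > 0"
    and analytic: "real_analytic_on f {a<..}"
    and nonzero: "\<exists>x>a. f x \<noteq> 0"
begin

lemma local_zero:
  assumes z: "z > a" and fz: "f z = 0"
  obtains \<rho> B q where "\<rho> > 0" "B \<ge> 0" "q \<midarrow>0\<rightarrow> 0" "\<forall>x. \<bar>x - z\<bar> < \<rho> \<longrightarrow>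
        \<bar>f x * deriv (deriv f) x\<bar> \<le> B * (deriv f x)^2 \<and> f x = q (x - z) * deriv f x
        \<and> (x \<noteq> z \<longrightarrow> f x \<noteq> 0)"
proof (rule local_zero_gen[OF a_pos analytic nonzero z fz])
  fix r assume "r > 0" "\<forall>x. \<bar>x - z\<bar> < r \<longrightarrow> f x = 0"
  then have "\<exists>r>0. \<forall>x. \<bar>x - z\<bar> < r \<longrightarrow> f x = 0" by blast
  with not_flat[OF a_pos analytic nonzero z] show ?thesis by blast
qed (rule that)

lemma local_H:
  assumes z: "z > a"
  shows "\<exists>\<rho>>0. \<exists>B. \<forall>x. \<bar>x - z\<bar> < \<rho> \<longrightarrow> \<bar>Hf f x\<bar> \<le> B \<and> (f x = 0 \<longrightarrow> x = z)"
proof (cases "f z = 0")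
  case True
  obtain \<rho> B q where \<rho>: "\<rho> > 0" "B \<ge> 0" and H: "\<forall>x. \<bar>x - z\<bar> < \<rho> \<longrightarrow>
        \<bar>f x * deriv (deriv f) x\<bar> \<le> B * (deriv f x)^2 \<and> f x = q (x - z) * deriv f x
        \<and> (x \<noteq> z \<longrightarrow> f x \<noteq> 0)"
    by (rule local_zero[OF z True])
  have "\<forall>x. \<bar>x - z\<bar> < \<rho> \<longrightarrow> \<bar>Hf f x\<bar> \<le> B \<and> (f x = 0 \<longrightarrow> x = z)"
  proof (intro allI impI)
    fix x assume x: "\<bar>x - z\<bar> < \<rho>"
    have h1: "\<bar>f x * deriv (deriv f) x\<bar> \<le> B * (deriv f x)^2" using H x by blast
    have h2: "x \<noteq> z \<longrightarrow> f x \<noteq> 0" using H x by blast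
    have "\<bar>Hf f x\<bar> \<le> B" unfolding Hf_def using H_le[OF \<rho>(2) h1] .
    then show "\<bar>Hf f x\<bar> \<le> B \<and> (f x = 0 \<longrightarrow> x = z)" using h2 by blast
  qed
  then show ?thesis using \<rho>(1) by blast
next
  case False
  obtain r c where r: "r > 0" and sm0: "\<forall>w. \<bar>w\<bar> < r \<longrightarrow> summable (\<lambda>n. c n * w^n)"
    and e0: "\<forall>y. \<bar>y - z\<bar> < r \<longrightarrow> f y = ps c (y - z) \<and> deriv f y = ps (diffs c) (y - z)
        \<and> deriv (deriv f) y = ps (diffs (diffs c)) (y - z)"
    using local_ps[OF a_pos analytic z] by blast
  have sm: "\<And>w. \<bar>w\<bar> < r \<Longrightarrow> summable (\<lambda>n. c n * w^n)" using sm0 by blast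
  have sm1: "\<And>w. \<bar>w\<bar> < r \<Longrightarrow> summable (\<lambda>n. diffs c n * w^n)" by (rule ps_summ_diffs[OF sm])
  have sm2: "\<And>w. \<bar>w\<bar> < r \<Longrightarrow> summable (\<lambda>n. diffs (diffs c) n * w^n)" by (rule ps_summ_diffs[OF sm1])
  have "isCont (ps c) 0" using ps_isCont[OF sm] r by force
  then have c0: "isCont (\<lambda>x. ps c (x - z)) z" by (rule isCont_shift)
  have "isCont (ps (diffs c)) 0" using ps_isCont[OF sm1] r by force
  then have c1: "isCont (\<lambda>x. ps (diffs c) (x - z)) z" by (rule isCont_shift)
  have "isCont (ps (diffs (diffs c))) 0" using ps_isCont[OF sm2] r by force
  then have c2: "isCont (\<lambda>x. ps (diffs (diffs c)) (x - z)) z" by (rule isCont_shift)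
  have fz: "ps c 0 \<noteq> 0" using e0 r False by auto
  define h where "h = (\<lambda>x. x^2 * ps c (x - z) * ps (diffs (diffs c)) (x - z) /
      ((ps c (x - z))^2 + x^2 * (ps (diffs c) (x - z))^2))"
  have den: "(ps c (z - z))^2 + z^2 * (ps (diffs c) (z - z))^2 \<noteq> 0"
  proof -
    have "(ps c 0)^2 > 0" using fz by simp
    moreover have "z^2 * (ps (diffs c) 0)^2 \<ge> 0" by simp
    ultimately have "(ps c 0)^2 + z^2 * (ps (diffs c) 0)^2 > 0" by linarith
    then show ?thesis by simp
  qed
  have ch: "isCont h z" unfolding h_def using c0 c1 c2 den by (intro continuous_intros) auto
  obtain \<rho>0 where \<rho>0: "\<rho>0 > 0" "\<And>x. \<bar>x - z\<bar> < \<rho>0 \<Longrightarrow> \<bar>h x\<bar> \<le> \<bar>h z\<bar> + 1"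
    using isCont_local_bound[OF ch] by blast
  have "isCont f z" using f_deriv1[OF a_pos analytic z] by (rule DERIV_isCont)
  then have "\<forall>\<^sub>F x in nhds z. f x \<noteq> 0"
    using False unfolding isCont_def tendsto_at_iff_tendsto_nhds by (metis tendsto_imp_eventually_ne)
  then obtain \<rho>1 where \<rho>1: "\<rho>1 > 0" "\<And>x. dist x z < \<rho>1 \<Longrightarrow> f x \<noteq> 0"
    unfolding eventually_nhds_metric by auto
  define \<rho> where "\<rho> = min r (min \<rho>0 \<rho>1)"
  have "\<forall>x. \<bar>x - z\<bar> < \<rho> \<longrightarrow> \<bar>Hf f x\<bar> \<le> \<bar>h z\<bar> + 1 \<and> (f x = 0 \<longrightarrow> x = z)"
  proof (intro allI impI)
    fix x assume x: "\<bar>x - z\<bar> < \<rho>"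
    have xr: "\<bar>x - z\<bar> < r" "\<bar>x - z\<bar> < \<rho>0" "dist x z < \<rho>1" using x by (auto simp: \<rho>_def dist_real_def)
    have ex: "f x = ps c (x - z)" "deriv f x = ps (diffs c) (x - z)" "deriv (deriv f) x = ps (diffs (diffs c)) (x - z)"
      using e0 xr(1) by auto
    have "Hf f x = h x" unfolding Hf_def h_def ex ..
    then have "\<bar>Hf f x\<bar> \<le> \<bar>h z\<bar> + 1" using \<rho>0(2)[OF xr(2)] by simp
    moreover have "f x \<noteq> 0" using \<rho>1(2)[OF xr(3)] .
    ultimately show "\<bar>Hf f x\<bar> \<le> \<bar>h z\<bar> + 1 \<and> (f x = 0 \<longrightarrow> x = z)" by blast
  qed
  moreover have "\<rho> > 0" using r \<rho>0 \<rho>1 by (simp add: \<rho>_def)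
  ultimately show ?thesis by blast
qed

definition sig :: "real \<Rightarrow> real" where
  "sig x = f x / sqrt ((f x)^2 + x^2 * (deriv f x)^2)"

lemma sig_cont_zero:
  assumes z: "z > a" and fz: "f z = 0"
  shows "isCont sig z"
proof -
  obtain \<rho> B q where \<rho>: "\<rho> > 0" "q \<midarrow>0\<rightarrow> 0" and H: "\<forall>x. \<bar>x - z\<bar> < \<rho> \<longrightarrow>
        \<bar>f x * deriv (deriv f) x\<bar> \<le> B * (deriv f x)^2 \<and> f x = q (x - z) * deriv f x
        \<and> (x \<noteq> z \<longrightarrow> f x \<noteq> 0)"
    by (rule local_zero[OF z fz])
  have q: "(\<lambda>x. q (x - z)) \<midarrow>z\<rightarrow> 0"
    using LIM_offset_zero_iff[of z "\<lambda>x. q (x - z)" 0] \<rho>(2) by simp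
  have ev: "\<forall>\<^sub>F x in at z. norm (sig x) \<le> norm (q (x - z)) * (1 / a)"
    unfolding eventually_at
  proof (intro exI[of _ "min \<rho> (z - a)"] conjI ballI impI)
    show "min \<rho> (z - a) > 0" using \<rho>(1) z by simp
    fix x :: real assume "x \<noteq> z \<and> dist x z < min \<rho> (z - a)"
    then have x: "\<bar>x - z\<bar> < \<rho>" "x > a" by (auto simp: dist_real_def)
    have fx: "f x = q (x - z) * deriv f x" using H x(1) by blast
    have "\<bar>sig x\<bar> \<le> \<bar>q (x - z)\<bar> / x"
      unfolding sig_def using sigma_le[of x "f x" "q (x - z)" "deriv f x"] fx x a_pos by simp
    also have "\<dots> \<le> \<bar>q (x - z)\<bar> / a" using x a_pos by (intro divide_left_mono) auto
    finally show "norm (sig x) \<le> norm (q (x - z)) * (1 / a)" by simp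
  qed
  have "sig \<midarrow>z\<rightarrow> 0" by (rule tendsto_0_le[OF q ev])
  moreover have "sig z = 0" by (simp add: sig_def fz)
  ultimately show ?thesis by (simp add: isCont_def)
qed

end


lemma dsig_bound:
  fixes A B C x M :: real
  assumes x: "x > 0" and M: "M \<ge> 0" and H: "\<bar>x^2 * A * C / (A^2 + x^2 * B^2)\<bar> \<le> M"
  shows "\<bar>(B * sqrt (A^2 + x^2 * B^2) - A * ((2*A*B + 2*x*B^2 + 2*x^2*B*C) / (2 * sqrt (A^2 + x^2 * B^2))))
          / (sqrt (A^2 + x^2 * B^2) * sqrt (A^2 + x^2 * B^2))\<bar> \<le> (3/2 + M) / x"
proof -
  define Q where "Q = A^2 + x^2 * B^2"
  define S where "S = sqrt Q"
  define u where "u = x * B"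
  define W where "W = x^2 * A * C"
  have Qu: "Q = A^2 + u^2" by (simp add: Q_def u_def power_mult_distrib)
  have Q0: "Q \<ge> 0" by (simp add: Q_def)
  have R0: "(3/2 + M) / x \<ge> 0" using x M by simp
  show ?thesis
  proof (cases "Q = 0")
    case True
    then show ?thesis using R0 by (simp add: Q_def[symmetric])
  next
    case False
    with Q0 have Qp: "Q > 0" by simp
    have Sp: "S > 0" using Qp by (simp add: S_def)
    have SS: "S * S = Q" using Q0 by (simp add: S_def)
    have eq: "(B * S - A * ((2*A*B + 2*x*B^2 + 2*x^2*B*C) / (2 * S))) / (S * S)
        = (u * (u^2 - A * u - W) / (S * Q)) / x"
    proof -
      have "(B * S - A * ((2*A*B + 2*x*B^2 + 2*x^2*B*C) / (2 * S))) / (S * S)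
          = (2 * B * (S * S) - A * (2*A*B + 2*x*B^2 + 2*x^2*B*C)) / (2 * S * Q)"
        using Sp SS by (simp add: field_simps)
      also have "2 * B * (S * S) - A * (2*A*B + 2*x*B^2 + 2*x^2*B*C) = 2 * (u * (u^2 - A * u - W) / x)"
        using x unfolding SS Q_def u_def W_def by (simp add: field_simps power2_eq_square power3_eq_cube)
      finally show ?thesis using x Sp Qp by (simp add: field_simps)
    qed
    have WQ: "\<bar>W\<bar> \<le> M * Q"
    proof -
      have "\<bar>W / Q\<bar> \<le> M" using H by (simp add: W_def Q_def)
      then show ?thesis using Qp by (simp add: abs_divide pos_divide_le_eq)
    qed
    have uS: "\<bar>u\<bar> \<le> S" unfolding S_def using Qu by (intro real_le_rsqrt) simp
    have Au: "\<bar>A * u\<bar> \<le> Q / 2"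
    proof -
      have "0 \<le> (\<bar>A\<bar> - \<bar>u\<bar>)^2" by simp
      then have "2 * (\<bar>A\<bar> * \<bar>u\<bar>) \<le> A^2 + u^2" by (simp add: power2_eq_square algebra_simps)
      then show ?thesis using Qu by (simp add: abs_mult)
    qed
    have u2: "u^2 \<le> Q" using Qu by simp
    have N: "\<bar>u^2 - A * u - W\<bar> \<le> (3/2 + M) * Q"
    proof -
      have a1: "A*u \<le> \<bar>A*u\<bar>" "-(A*u) \<le> \<bar>A*u\<bar>" "W \<le> \<bar>W\<bar>" "-W \<le> \<bar>W\<bar>" "u^2 \<ge> 0" by auto
      have "\<bar>u^2 - A * u - W\<bar> \<le> u^2 + \<bar>A * u\<bar> + \<bar>W\<bar>" by (rule abs_leI) (use a1 in linarith)+
      then show ?thesis using Au WQ u2 by (simp add: algebra_simps)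
    qed
    have "\<bar>u * (u^2 - A * u - W)\<bar> \<le> S * ((3/2 + M) * Q)"
      unfolding abs_mult by (rule mult_mono[OF uS N]) (use Sp in auto)
    then have "\<bar>u * (u^2 - A * u - W) / (S * Q)\<bar> \<le> 3/2 + M"
      using Sp Qp by (simp add: abs_divide pos_divide_le_eq mult_ac)
    moreover have gen: "\<And>e. \<bar>e\<bar> \<le> 3/2 + M \<Longrightarrow> \<bar>e / x\<bar> \<le> (3/2 + M) / x"
      using x by (simp add: abs_divide divide_right_mono)
    ultimately have "\<bar>(u * (u^2 - A * u - W) / (S * Q)) / x\<bar> \<le> (3/2 + M) / x" by blast
    then show ?thesis using eq by (simp add: S_def Q_def)
  qed
qed

lemma sig_kappa:
  fixes A B x :: real
  assumes x: "x > 0" and A: "A \<noteq> 0"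
  shows "\<bar>A / sqrt (A^2 + x^2 * B^2)\<bar> * (1 + x * \<bar>B\<bar> / \<bar>A\<bar>) \<ge> 1"
    and "\<bar>A / sqrt (A^2 + x^2 * B^2)\<bar> * (1 + x * \<bar>B\<bar> / \<bar>A\<bar>) \<le> 2"
proof -
  define Q where "Q = A^2 + x^2 * B^2"
  define u where "u = x * \<bar>B\<bar>"
  have u0: "u \<ge> 0" using x by (simp add: u_def)
  have Qu: "Q = A^2 + u^2" by (simp add: Q_def u_def power_mult_distrib)
  have Qp: "Q > 0" using A by (simp add: Q_def add_pos_nonneg)
  have Sp: "sqrt Q > 0" using Qp by simp
  have e: "\<bar>A / sqrt Q\<bar> * (1 + x * \<bar>B\<bar> / \<bar>A\<bar>) = (\<bar>A\<bar> + u) / sqrt Q"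
    using A Sp by (simp add: abs_divide u_def field_simps)
  have s1: "sqrt Q \<le> \<bar>A\<bar> + u"
  proof (rule real_le_lsqrt)
    show "0 \<le> \<bar>A\<bar> + u" using u0 by simp
    show "Q \<le> (\<bar>A\<bar> + u)^2" using Qu u0 by (simp add: power2_eq_square algebra_simps)
  qed
  have s2: "\<bar>A\<bar> + u \<le> 2 * sqrt Q"
  proof -
    have "(\<bar>A\<bar> + u)^2 \<le> 4 * Q"
    proof -
      have "0 \<le> (\<bar>A\<bar> - u)^2" by simp
      then have h: "2 * (\<bar>A\<bar> * u) \<le> A^2 + u^2" by (simp add: power2_eq_square algebra_simps)
      have "(\<bar>A\<bar> + u)^2 = A^2 + 2 * (\<bar>A\<bar> * u) + u^2" by (simp add: power2_eq_square algebra_simps)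
      moreover have "A^2 \<ge> 0" "u^2 \<ge> 0" by auto
      ultimately show ?thesis using h Qu by linarith
    qed
    then have "\<bar>A\<bar> + u \<le> sqrt (4 * Q)" by (rule real_le_rsqrt)
    also have "sqrt (4 * Q) = 2 * sqrt Q" by (simp add: real_sqrt_mult)
    finally show ?thesis .
  qed
  show "\<bar>A / sqrt (A^2 + x^2 * B^2)\<bar> * (1 + x * \<bar>B\<bar> / \<bar>A\<bar>) \<ge> 1"
    unfolding Q_def[symmetric] e using s1 Sp by (simp add: le_divide_eq)
  show "\<bar>A / sqrt (A^2 + x^2 * B^2)\<bar> * (1 + x * \<bar>B\<bar> / \<bar>A\<bar>) \<le> 2"
    unfolding Q_def[symmetric] e using s2 Sp by (simp add: divide_le_eq)
qed


lemma finite_cover: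
  fixes S :: "real set"
  assumes "compact S" "\<And>z. z \<in> S \<Longrightarrow> \<rho> z > 0"
  shows "\<exists>T. finite T \<and> T \<subseteq> S \<and> S \<subseteq> (\<Union>c\<in>T. ball c (\<rho> c))"
proof -
  have "S \<subseteq> (\<Union>c\<in>S. ball c (\<rho> c))" using assms(2) by force
  from compactE_image[OF assms(1) _ this] obtain T where "T \<subseteq> S" "finite T" "S \<subseteq> (\<Union>c\<in>T. ball c (\<rho> c))"
    by blast
  then show ?thesis by blast
qed

definition Dsig :: "(real \<Rightarrow> real) \<Rightarrow> real \<Rightarrow> real" where
  "Dsig f x = (deriv f x * sqrt ((f x)^2 + x^2 * (deriv f x)^2) - f x * ((2 * f x * deriv f x + 2*x*(deriv f x)^2
     + 2*x^2 * deriv f x * deriv (deriv f) x) / (2 * sqrt ((f x)^2 + x^2 * (deriv f x)^2))))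
     / (sqrt ((f x)^2 + x^2 * (deriv f x)^2) * sqrt ((f x)^2 + x^2 * (deriv f x)^2))"

context
  fixes f :: "real \<Rightarrow> real" and a :: real
  assumes a_pos: "a > 0"
    and analytic: "real_analytic_on f {a<..}"
    and nonzero: "\<exists>x>a. f x \<noteq> 0"
begin

lemma sig_deriv:
  assumes x: "x > a" and fx: "f x \<noteq> 0"
  shows "(sig f has_real_derivative Dsig f x) (at x)"
proof -
  note d1 = f_deriv1[OF a_pos analytic x] and d2 = f_deriv2[OF a_pos analytic x]
  define Q' where "Q' = 2 * f x * deriv f x + 2*x*(deriv f x)^2 + 2*x^2 * deriv f x * deriv (deriv f) x"
  have dQ: "((\<lambda>y. (f y)^2 + y^2 * (deriv f y)^2) has_real_derivative Q') (at x)"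
    unfolding Q'_def using d1 d2 by (auto intro!: derivative_eq_intros simp: algebra_simps power2_eq_square)
  have Qp: "(f x)^2 + x^2 * (deriv f x)^2 > 0" using fx by (simp add: add_pos_nonneg)
  have dS0: "((\<lambda>y. sqrt ((f y)^2 + y^2 * (deriv f y)^2)) has_real_derivative
        inverse (sqrt ((f x)^2 + x^2 * (deriv f x)^2)) / 2 * Q') (at x)"
    by (rule DERIV_chain2[where f = sqrt and g = "\<lambda>y. (f y)^2 + y^2 * (deriv f y)^2", OF DERIV_real_sqrt[OF Qp] dQ])
  have dS: "((\<lambda>y. sqrt ((f y)^2 + y^2 * (deriv f y)^2)) has_real_derivative
        Q' / (2 * sqrt ((f x)^2 + x^2 * (deriv f x)^2))) (at x)"
    using dS0 by (rule DERIV_cong) (simp add: field_simps)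
  have ne: "sqrt ((f x)^2 + x^2 * (deriv f x)^2) \<noteq> 0" using Qp by simp
  have "((\<lambda>y. f y / sqrt ((f y)^2 + y^2 * (deriv f y)^2)) has_real_derivative Dsig f x) (at x)"
    unfolding Dsig_def Q'_def[symmetric] by (rule DERIV_divide[OF d1 dS ne])
  then show ?thesis unfolding sig_def[OF a_pos analytic nonzero, abs_def] .
qed

lemma sig_isCont:
  assumes x: "x > a"
  shows "isCont (sig f) x"
proof (cases "f x = 0")
  case True then show ?thesis by (rule sig_cont_zero[OF a_pos analytic nonzero x])
next
  case False show ?thesis by (rule DERIV_isCont[OF sig_deriv[OF x False]])
qed

lemma H_global:
  assumes H_bound: "\<exists>C>0. Limsup (at_right a) (\<lambda>x. ereal \<bar>Hf f x\<bar>) \<le> ereal C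
                      \<and> Limsup at_top (\<lambda>x. ereal \<bar>Hf f x\<bar>) \<le> ereal C"
  shows "\<exists>M\<ge>0. \<forall>x>a. \<bar>Hf f x\<bar> \<le> M"
proof -
  obtain C0 where C0: "C0 > 0" "Limsup (at_right a) (\<lambda>x. ereal \<bar>Hf f x\<bar>) \<le> ereal C0"
      "Limsup at_top (\<lambda>x. ereal \<bar>Hf f x\<bar>) \<le> ereal C0"
    using H_bound by blast
  have lt: "ereal C0 < ereal (C0 + 1)" by simp
  have "\<forall>\<^sub>F x in at_right a. ereal \<bar>Hf f x\<bar> < ereal (C0 + 1)"
    by (rule Limsup_lessD) (use C0(2) lt in order)
  then obtain b where b: "b > a" "\<And>y. y > a \<Longrightarrow> y < b \<Longrightarrow> \<bar>Hf f y\<bar> < C0 + 1"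
    unfolding eventually_at_right_field by auto
  have "\<forall>\<^sub>F x in at_top. ereal \<bar>Hf f x\<bar> < ereal (C0 + 1)"
    by (rule Limsup_lessD) (use C0(3) lt in order)
  then obtain R where R: "\<And>y. y \<ge> R \<Longrightarrow> \<bar>Hf f y\<bar> < C0 + 1"
    unfolding eventually_at_top_linorder by auto
  define K where "K = {(a + b) / 2 .. max R b}"
  have Ka: "\<And>z. z \<in> K \<Longrightarrow> z > a" using b(1) by (auto simp: K_def)
  have "\<forall>z\<in>K. \<exists>p::real\<times>real. fst p > 0 \<and> (\<forall>x. \<bar>x - z\<bar> < fst p \<longrightarrow> \<bar>Hf f x\<bar> \<le> snd p)"
  proof
    fix z assume "z \<in> K"
    then obtain \<rho> B where "\<rho> > 0" "\<forall>x. \<bar>x - z\<bar> < \<rho> \<longrightarrow> \<bar>Hf f x\<bar> \<le> B \<and> (f x = 0 \<longrightarrow> x = z)"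
      using local_H[OF a_pos analytic nonzero Ka] by blast
    then show "\<exists>p::real\<times>real. fst p > 0 \<and> (\<forall>x. \<bar>x - z\<bar> < fst p \<longrightarrow> \<bar>Hf f x\<bar> \<le> snd p)"
      by (intro exI[of _ "(\<rho>, B)"]) auto
  qed
  then obtain P where P: "\<And>z. z \<in> K \<Longrightarrow> fst (P z) > 0 \<and> (\<forall>x. \<bar>x - z\<bar> < fst (P z) \<longrightarrow> \<bar>Hf f x\<bar> \<le> snd (P z))"
    by metis
  obtain T where T: "finite T" "T \<subseteq> K" "K \<subseteq> (\<Union>c\<in>T. ball c (fst (P c)))"
    using finite_cover[of K "\<lambda>c. fst (P c)"] P by (auto simp: K_def)
  define M0 where "M0 = Max (insert 0 ((\<lambda>c. snd (P c)) ` T))"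
  define M where "M = max (C0 + 1) M0"
  have M0: "\<And>c. c \<in> T \<Longrightarrow> snd (P c) \<le> M0" unfolding M0_def using T(1) by (intro Max_ge) auto
  have "\<forall>x>a. \<bar>Hf f x\<bar> \<le> M"
  proof (intro allI impI)
    fix x assume x: "x > a"
    show "\<bar>Hf f x\<bar> \<le> M"
    proof (cases "x < b")
      case True then show ?thesis using b(2)[OF x True] by (simp add: M_def)
    next
      case False
      show ?thesis
      proof (cases "x \<ge> R")
        case True then show ?thesis using R[OF True] by (simp add: M_def)
      next
        case False2: False
        have "x \<in> K" using False False2 b(1) by (auto simp: K_def)
        then obtain c where c: "c \<in> T" "x \<in> ball c (fst (P c))" using T(3) by blast
        have "\<bar>x - c\<bar> < fst (P c)" using c(2) by (simp add: dist_real_def abs_minus_commute)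
        then have "\<bar>Hf f x\<bar> \<le> snd (P c)" using P[of c] c(1) T(2) by blast
        also have "\<dots> \<le> M0" by (rule M0[OF c(1)])
        finally show ?thesis by (simp add: M_def)
      qed
    qed
  qed
  moreover have "M \<ge> 0" using C0(1) by (simp add: M_def)
  ultimately show ?thesis by blast
qed

lemma zeros_finite:
  assumes s: "s > a"
  shows "finite {x\<in>{s..t}. f x = 0}"
proof -
  have "\<forall>z\<in>{s..t}. \<exists>\<rho>. \<rho> > 0 \<and> (\<forall>x. \<bar>x - z\<bar> < \<rho> \<longrightarrow> (f x = 0 \<longrightarrow> x = z))"
  proof
    fix z assume "z \<in> {s..t}"
    then have "z > a" using s by simp
    then obtain \<rho> B where "\<rho> > 0" "\<forall>x. \<bar>x - z\<bar> < \<rho> \<longrightarrow> \<bar>Hf f x\<bar> \<le> B \<and> (f x = 0 \<longrightarrow> x = z)"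
      using local_H[OF a_pos analytic nonzero] by blast
    then show "\<exists>\<rho>. \<rho> > 0 \<and> (\<forall>x. \<bar>x - z\<bar> < \<rho> \<longrightarrow> (f x = 0 \<longrightarrow> x = z))" by blast
  qed
  then obtain \<rho> where P: "\<And>z. z \<in> {s..t} \<Longrightarrow> \<rho> z > 0 \<and> (\<forall>x. \<bar>x - z\<bar> < \<rho> z \<longrightarrow> (f x = 0 \<longrightarrow> x = z))"
    by metis
  obtain T where T: "finite T" "T \<subseteq> {s..t}" "{s..t} \<subseteq> (\<Union>c\<in>T. ball c (\<rho> c))"
    using finite_cover[of "{s..t}" \<rho>] P by auto
  have "{x\<in>{s..t}. f x = 0} \<subseteq> T"
  proof
    fix x assume x: "x \<in> {x\<in>{s..t}. f x = 0}"
    then obtain c where c: "c \<in> T" "x \<in> ball c (\<rho> c)" using T(3) by blast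
    have "\<bar>x - c\<bar> < \<rho> c" using c(2) by (simp add: dist_real_def abs_minus_commute)
    then have "x = c" using P[of c] c(1) T(2) x by blast
    then show "x \<in> T" using c(1) by simp
  qed
  then show ?thesis using T(1) by (rule finite_subset)
qed

lemma Dsig_bound:
  assumes x: "x > a" and M: "M \<ge> 0" and HM: "\<forall>y>a. \<bar>Hf f y\<bar> \<le> M"
  shows "\<bar>Dsig f x\<bar> \<le> (3/2 + M) / x"
proof -
  have "\<bar>x^2 * f x * deriv (deriv f) x / ((f x)^2 + x^2 * (deriv f x)^2)\<bar> \<le> M"
    using HM x by (simp add: Hf_def)
  from dsig_bound[OF _ M this] x a_pos show ?thesis unfolding Dsig_def by simp
qed

lemma sig_lip:
  assumes M: "M \<ge> 0" and HM: "\<forall>y>a. \<bar>Hf f y\<bar> \<le> M" and s: "a < s" and st: "s \<le> t"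
  shows "\<bar>sig f t - sig f s\<bar> \<le> (3/2 + M) * (ln t - ln s)"
proof (rule lip_ln[where E = "{x\<in>{s..t}. f x = 0}" and g' = "Dsig f"])
  show "0 < s" using s a_pos by simp
  show "s \<le> t" by (rule st)
  show "finite {x\<in>{s..t}. f x = 0}" by (rule zeros_finite[OF s])
  show "continuous_on {s..t} (sig f)"
    using s by (intro continuous_at_imp_continuous_on ballI sig_isCont) auto
  show "\<And>x. x \<in> {s..t} - {x\<in>{s..t}. f x = 0} \<Longrightarrow> (sig f has_real_derivative Dsig f x) (at x)"
    using s by (intro sig_deriv) auto
  show "\<And>x. x \<in> {s..t} \<Longrightarrow> \<bar>Dsig f x\<bar> \<le> (3/2 + M) / x"
    using s by (intro Dsig_bound[OF _ M HM]) auto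
qed

end


context
  fixes f :: "real \<Rightarrow> real" and a :: real
  assumes a_pos: "a > 0"
    and analytic: "real_analytic_on f {a<..}"
    and nonzero: "\<exists>x>a. f x \<noteq> 0"
begin

lemma sig_eq: "sig f x = f x / sqrt ((f x)^2 + x^2 * (deriv f x)^2)"
  by (rule sig_def[OF a_pos analytic nonzero])

lemma sig_kappa_le:
  assumes y: "y > 0" and fy: "f y \<noteq> 0"
  shows "\<bar>sig f y\<bar> * (1 + y * \<bar>deriv f y\<bar> / \<bar>f y\<bar>) \<ge> 1"
    and "\<bar>sig f y\<bar> * (1 + y * \<bar>deriv f y\<bar> / \<bar>f y\<bar>) \<le> 2"
  unfolding sig_eq using sig_kappa[OF y fy, of "deriv f y"] by auto

lemma kappa_eq:
  assumes y: "y > 0" and fy: "f y \<noteq> 0"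
  shows "kappa f y = ereal (y * \<bar>deriv f y\<bar> / \<bar>f y\<bar>)"
  using y fy by (simp add: kappa_def)

lemma sig_a:
  assumes kappa_left: "((\<lambda>x. kappa f x) \<longlongrightarrow> \<infinity>) (at_right a)"
    and M: "M \<ge> 0" and HM: "\<forall>y>a. \<bar>Hf f y\<bar> \<le> M" and x: "x > a"
  shows "\<bar>sig f x\<bar> \<le> (3/2 + M) * (ln x - ln a)"
proof (rule ccontr)
  define K where "K = 3/2 + M"
  assume "\<not> \<bar>sig f x\<bar> \<le> (3/2 + M) * (ln x - ln a)"
  then have gt: "\<bar>sig f x\<bar> > K * (ln x - ln a)" by (simp add: K_def)
  define \<delta> where "\<delta> = \<bar>sig f x\<bar> - K * (ln x - ln a)"
  have \<delta>: "\<delta> > 0" using gt by (simp add: \<delta>_def)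
  have ev1: "\<forall>\<^sub>F y in at_right a. ereal (2 / \<delta>) < kappa f y"
    using kappa_left unfolding tendsto_PInfty by blast
  have ev2: "\<forall>\<^sub>F y in at_right a. y \<in> {a<..<x}" by (rule eventually_at_right_real[OF x])
  have "\<forall>\<^sub>F y in at_right a. y \<in> {a<..<x} \<and> \<bar>sig f y\<bar> < \<delta>"
    using ev1 ev2
  proof eventually_elim
    case (elim y)
    then have y: "y > a" "y < x" and k: "ereal (2 / \<delta>) < kappa f y" by auto
    have y0: "y > 0" using y a_pos by simp
    show ?case
    proof (cases "f y = 0")
      case True then show ?thesis using y \<delta> by (simp add: sig_eq)
    next
      case False
      define \<kappa> where "\<kappa> = y * \<bar>deriv f y\<bar> / \<bar>f y\<bar>"
      have "2 / \<delta> < \<kappa>" using k kappa_eq[OF y0 False] by (simp add: \<kappa>_def)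
      then have "2 < \<kappa> * \<delta>" using \<delta> by (simp add: divide_less_eq)
      moreover have "\<kappa> \<ge> 0" using y0 by (simp add: \<kappa>_def)
      moreover have "\<bar>sig f y\<bar> * (1 + \<kappa>) \<le> 2" using sig_kappa_le(2)[OF y0 False] by (simp add: \<kappa>_def)
      ultimately have "\<bar>sig f y\<bar> * (1 + \<kappa>) < \<delta> * (1 + \<kappa>)" using \<delta> by (simp add: algebra_simps)
      then have "\<bar>sig f y\<bar> < \<delta>" using \<open>\<kappa> \<ge> 0\<close> by (simp add: mult_less_cancel_right)
      then show ?thesis using y by simp
    qed
  qed
  then obtain y where y: "a < y" "y < x" "\<bar>sig f y\<bar> < \<delta>"
    using eventually_happens'[of "at_right a"] by force
  have "\<bar>sig f x - sig f y\<bar> \<le> K * (ln x - ln y)"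
    unfolding K_def by (rule sig_lip[OF a_pos analytic nonzero M HM y(1)]) (use y in simp)
  moreover have "ln y > ln a" using y a_pos by simp
  moreover have "K \<ge> 0" using M by (simp add: K_def)
  ultimately have "\<bar>sig f x - sig f y\<bar> \<le> K * (ln x - ln a)"
    by (smt (verit) mult_left_mono)
  then have "\<bar>sig f x\<bar> < \<delta> + K * (ln x - ln a)" using y(3) by linarith
  then show False by (simp add: \<delta>_def)
qed

lemma main:
  assumes kappa_left: "((\<lambda>x. kappa f x) \<longlongrightarrow> \<infinity>) (at_right a)"
    and H_bound: "\<exists>C>0. Limsup (at_right a) (\<lambda>x. ereal \<bar>Hf f x\<bar>) \<le> ereal C
                      \<and> Limsup at_top (\<lambda>x. ereal \<bar>Hf f x\<bar>) \<le> ereal C"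
  shows "amenable f {a<..}"
proof -
  obtain M where M: "M \<ge> 0" and HM: "\<forall>y>a. \<bar>Hf f y\<bar> \<le> M"
    using H_global[OF a_pos analytic nonzero H_bound] by blast
  define K where "K = 3/2 + M"
  define C where "C = max 4 (2 * K)"
  have K0: "K > 0" using M by (simp add: K_def)
  have C4: "C \<ge> 4" and C2K: "C \<ge> 2 * K" by (simp_all add: C_def)
  have C0: "C > 0" using C4 by simp
  have lipK: "\<And>s t. a < s \<Longrightarrow> s \<le> t \<Longrightarrow> \<bar>sig f t - sig f s\<bar> \<le> K * (ln t - ln s)"
    unfolding K_def by (rule sig_lip[OF a_pos analytic nonzero M HM])
  have sigaK: "\<And>x. a < x \<Longrightarrow> \<bar>sig f x\<bar> \<le> K * (ln x - ln a)"
    unfolding K_def by (rule sig_a[OF kappa_left M HM])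
  have key: "y > a \<and> mu f y \<le> ereal C * mu f x"
    if x: "x > a" and kx: "kappa f x < \<infinity>" and ry: "reldist y x < 1 / (ereal C * mu f x)" for x y
  proof -
    have x0: "x > 0" using x a_pos by simp
    have fx: "f x \<noteq> 0" using kx x0 by (auto simp: kappa_def)
    define \<kappa> where "\<kappa> = x * \<bar>deriv f x\<bar> / \<bar>f x\<bar>"
    define m where "m = 1 + \<kappa>"
    have k0: "\<kappa> \<ge> 0" using x0 by (simp add: \<kappa>_def)
    have m1: "m \<ge> 1" using k0 by (simp add: m_def)
    have mux: "mu f x = ereal m" using kappa_eq[OF x0 fx] by (simp add: mu_def m_def \<kappa>_def)
    have Cm: "C * m > 0" using C0 m1 by simp
    have "1 / (ereal C * mu f x) = ereal (1 / (C * m))"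
      using Cm C0 m1 by (simp add: mux one_ereal_def)
    with ry have ry': "reldist y x < ereal (1 / (C * m))" by simp
    have yx: "y * x > 0"
    proof (rule ccontr)
      assume "\<not> y * x > 0"
      then have "reldist y x = \<infinity>" using x0 by (simp add: reldist_def)
      with ry' show False by simp
    qed
    then have y0: "y > 0" using x0 by (simp add: zero_less_mult_iff)
    define d where "d = \<bar>ln x - ln y\<bar>"
    have "reldist y x = ereal d" using yx x0 y0 by (simp add: reldist_def d_def ln_div)
    with ry' have d1: "d < 1 / (C * m)" by simp
    then have dCm: "d * (C * m) < 1" using Cm by (simp add: less_divide_eq)
    have d0: "d \<ge> 0" by (simp add: d_def)
    have Kdm: "K * d * m < 1/2"
    proof -
      have "2 * K * (d * m) \<le> C * (d * m)" using C2K d0 m1 by (intro mult_right_mono) auto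
      then show ?thesis using dCm by (simp add: algebra_simps)
    qed
    define s where "s = \<bar>sig f x\<bar>"
    have sm: "s * m \<ge> 1" using sig_kappa_le(1)[OF x0 fx] by (simp add: s_def m_def \<kappa>_def)
    have sK: "s \<le> K * (ln x - ln a)" using sigaK[OF x] by (simp add: s_def)
    have "K * (ln x - ln a) * m \<ge> 1"
    proof -
      have "s * m \<le> K * (ln x - ln a) * m" using sK m1 by (intro mult_right_mono) auto
      then show ?thesis using sm by linarith
    qed
    then have "K * m * ((ln x - ln a) - d) > 0" using Kdm by (simp add: algebra_simps)
    moreover have "K * m > 0" using K0 m1 by simp
    ultimately have "(ln x - ln a) - d > 0" by (simp add: zero_less_mult_iff)
    then have "ln y > ln a" unfolding d_def by linarith
    then have ya: "y > a" using y0 a_pos by simp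
    have lip: "\<bar>sig f x - sig f y\<bar> \<le> K * d"
    proof (cases "y \<le> x")
      case True
      then have "ln y \<le> ln x" using y0 by simp
      then show ?thesis using lipK[OF ya True] by (simp add: d_def)
    next
      case False
      then have "\<bar>sig f y - sig f x\<bar> \<le> K * (ln y - ln x)" using lipK[OF x] by simp
      then show ?thesis using False x0 y0 by (simp add: d_def abs_minus_commute)
    qed
    define sy where "sy = \<bar>sig f y\<bar>"
    have "sy \<ge> s - K * d" using lip by (simp add: sy_def s_def)
    then have "sy * m \<ge> (s - K * d) * m" using m1 by (intro mult_right_mono) auto
    then have sym: "sy * m > 1/2" using sm Kdm by (simp add: algebra_simps)
    have "sy \<ge> 0" by (simp add: sy_def)
    then have sy0: "sy > 0" using sym by (cases "sy = 0") auto
    have fy: "f y \<noteq> 0"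
    proof
      assume "f y = 0"
      then have "sy = 0" by (simp add: sy_def sig_eq)
      with sy0 show False by simp
    qed
    define my where "my = 1 + y * \<bar>deriv f y\<bar> / \<bar>f y\<bar>"
    have muy: "mu f y = ereal my" using kappa_eq[OF y0 fy] by (simp add: mu_def my_def)
    have symy: "sy * my \<le> 2" using sig_kappa_le(2)[OF y0 fy] by (simp add: sy_def my_def)
    have "sy * my < sy * (4 * m)" using symy sym by (simp add: algebra_simps)
    then have "my < 4 * m" using sy0 by simp
    also have "4 * m \<le> C * m" using C4 m1 by (intro mult_right_mono) auto
    finally have "my \<le> C * m" by simp
    then have "mu f y \<le> ereal C * mu f x" by (simp add: muy mux)
    with ya show ?thesis by simp
  qed
  show ?thesis
    unfolding amenable_def Let_def
  proof (intro exI[of _ C] conjI ballI impI subsetI)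
    show "C > 0" by (rule C0)
  next
    fix x y assume "x \<in> {a<..}" "kappa f x < \<infinity>" "y \<in> {y. reldist y x < 1 / (ereal C * mu f x)}"
    then show "y \<in> {a<..}" using key by auto
  next
    fix x y assume "x \<in> {a<..}" "kappa f x < \<infinity>" "y \<in> {y. reldist y x < 1 / (ereal C * mu f x)}"
    then show "mu f y \<le> ereal C * mu f x" using key by auto
  qed
qed

end

theorem proposition2:
  fixes f :: "real \<Rightarrow> real" and a :: real
  assumes a_pos: "a > 0"
    and analytic: "real_analytic_on f {a<..}"
    and nonzero: "\<exists>x>a. f x \<noteq> 0"
    and kappa_left: "((\<lambda>x. kappa f x) \<longlongrightarrow> \<infinity>) (at_right a)"
    and kappa_seq: "\<And>xs :: nat \<Rightarrow> real.
           (\<forall>j. xs j > a) \<Longrightarrow> filterlim xs at_top sequentially \<Longrightarrow>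
           ((\<lambda>j. reldist_set (xs j) {x\<in>{a<..}. f x = 0}) \<longlonglongrightarrow> 0) \<Longrightarrow>
           ((\<lambda>j. kappa f (xs j)) \<longlonglongrightarrow> \<infinity>)"
    and H_bound: "\<exists>C>0. Limsup (at_right a) (\<lambda>x. ereal \<bar>Hf f x\<bar>) \<le> ereal C
                      \<and> Limsup at_top (\<lambda>x. ereal \<bar>Hf f x\<bar>) \<le> ereal C"
  shows "amenable f {a<..}"
    using main[OF a_pos analytic nonzero kappa_left H_bound] .

end
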